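(* Let $X$ be a Banach space, $n\in\mathbb{N}$, and $S\in\mathrm{Lip}_0(X)$. Define $T\in\mathrm{Lip}_0(\ell_1^n(X))$ by $T(x_1,\dots,x_n)=(Sx_1,\dots,Sx_n)$. Then $\omega(T)=\omega(S)$.
   Context: $\ell_1^n(X)$ is $X^n$ with norm $\|(x_1,\dots,x_n)\|=\sum_{i=1}^n\|x_i\|$. For a Banach space $E$: $\mathrm{Lip}_0(E)$ is the set of Lipschitz maps $T:E\to E$ with $T(0)=0$; $D(x)=\{x^*\in E^*: x^*(x)=\|x^*\|\|x\|=\|x\|^2\}$; $\omega(T)=\sup\{|f(Tx-Ty)|/\|x-y\|^2: x,y\in E,\ x\neq y,\ f\in D(x-y)\}$. *)

theory Defs
  imports "HOL-Analysis.Analysis"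
begin

definition Lip0 :: "('a::real_normed_vector \<Rightarrow> 'a) set" where
  "Lip0 = {S. (\<exists>C. C-lipschitz_on UNIV S) \<and> S 0 = 0}"

definition Dset :: "'a::real_normed_vector \<Rightarrow> ('a \<Rightarrow> real) set" where
  "Dset x = {f. bounded_linear f \<and> f x = onorm f * norm x \<and> f x = (norm x)^2}"

definition omega :: "('a::real_normed_vector \<Rightarrow> 'a) \<Rightarrow> real" where
  "omega T = Sup {\<bar>f (T x - T y)\<bar> / (norm (x - y))^2 | x y f. x \<noteq> y \<and> f \<in> Dset (x - y)}"

section \<open>The space l_1^n(X), realized as functions nat => X vanishing from index n on\<close>

definition l1_carrier :: "nat \<Rightarrow> (nat \<Rightarrow> 'a::real_normed_vector) set" where
  "l1_carrier n = {x. \<forall>i\<ge>n. x i = 0}"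

definition l1_norm :: "nat \<Rightarrow> (nat \<Rightarrow> 'a::real_normed_vector) \<Rightarrow> real" where
  "l1_norm n x = (\<Sum>i<n. norm (x i))"

definition l1_diff :: "(nat \<Rightarrow> 'a::real_normed_vector) \<Rightarrow> (nat \<Rightarrow> 'a) \<Rightarrow> (nat \<Rightarrow> 'a)" where
  "l1_diff x y = (\<lambda>i. x i - y i)"

definition l1_dual :: "nat \<Rightarrow> ((nat \<Rightarrow> 'a::real_normed_vector) \<Rightarrow> real) set" where
  "l1_dual n = {f.
     (\<forall>x\<in>l1_carrier n. \<forall>y\<in>l1_carrier n. f (\<lambda>i. x i + y i) = f x + f y) \<and>
     (\<forall>x\<in>l1_carrier n. \<forall>c. f (\<lambda>i. c *\<^sub>R x i) = c * f x) \<and>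
     (\<exists>K. \<forall>x\<in>l1_carrier n. \<bar>f x\<bar> \<le> K * l1_norm n x)}"

definition l1_dual_norm :: "nat \<Rightarrow> ((nat \<Rightarrow> 'a::real_normed_vector) \<Rightarrow> real) \<Rightarrow> real" where
  "l1_dual_norm n f = Sup {\<bar>f x\<bar> | x. x \<in> l1_carrier n \<and> l1_norm n x \<le> 1}"

definition l1_Dset :: "nat \<Rightarrow> (nat \<Rightarrow> 'a::real_normed_vector) \<Rightarrow> ((nat \<Rightarrow> 'a) \<Rightarrow> real) set" where
  "l1_Dset n x = {f. f \<in> l1_dual n \<and> f x = l1_dual_norm n f * l1_norm n x \<and> f x = (l1_norm n x)^2}"

definition l1_omega :: "nat \<Rightarrow> ((nat \<Rightarrow> 'a::real_normed_vector) \<Rightarrow> (nat \<Rightarrow> 'a)) \<Rightarrow> real" where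
  "l1_omega n T = Sup {\<bar>f (l1_diff (T x) (T y))\<bar> / (l1_norm n (l1_diff x y))^2 | x y f.
      x \<in> l1_carrier n \<and> y \<in> l1_carrier n \<and> x \<noteq> y \<and> f \<in> l1_Dset n (l1_diff x y)}"

definition diag_map :: "nat \<Rightarrow> ('a::real_normed_vector \<Rightarrow> 'a) \<Rightarrow> (nat \<Rightarrow> 'a) \<Rightarrow> (nat \<Rightarrow> 'a)" where
  "diag_map n S x = (\<lambda>i. if i < n then S (x i) else 0)"

end

theory Submission
  imports Defs
begin

definition ev :: "nat \<Rightarrow> 'a::real_normed_vector \<Rightarrow> nat \<Rightarrow> 'a" where
  "ev i v = (\<lambda>j. if j = i then v else 0)"

lemma ev_carrier: "i < n \<Longrightarrow> ev i v \<in> l1_carrier n"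
  by (auto simp: ev_def l1_carrier_def)

lemma ev_norm: "i < n \<Longrightarrow> l1_norm n (ev i v) = norm v"
proof -
  assume i: "i < n"
  have "(\<Sum>j<n. norm (ev i v j)) = (\<Sum>j<n. if j = i then norm v else 0)"
    by (rule sum.cong) (auto simp: ev_def)
  also have "\<dots> = norm v" using i by (simp add: sum.delta)
  finally show ?thesis by (simp add: l1_norm_def)
qed

lemma dual_add: "f \<in> l1_dual n \<Longrightarrow> x \<in> l1_carrier n \<Longrightarrow> y \<in> l1_carrier n \<Longrightarrow>
   f (\<lambda>i. x i + y i) = f x + f y"
  by (simp add: l1_dual_def)

lemma dual_scale: "f \<in> l1_dual n \<Longrightarrow> x \<in> l1_carrier n \<Longrightarrow> f (\<lambda>i. c *\<^sub>R x i) = c * f x"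
  by (simp add: l1_dual_def)

lemma dual_zero: "f \<in> l1_dual n \<Longrightarrow> f (\<lambda>i. 0) = 0"
proof -
  assume f: "f \<in> l1_dual n"
  have "(\<lambda>i. 0::'a) \<in> l1_carrier n" by (simp add: l1_carrier_def)
  from dual_scale[OF f this, of 0] show ?thesis by simp
qed

lemma ev_add: "f \<in> l1_dual n \<Longrightarrow> i < n \<Longrightarrow> f (ev i (a + b)) = f (ev i a) + f (ev i b)"
proof -
  assume f: "f \<in> l1_dual n" and i: "i < n"
  have "ev i (a + b) = (\<lambda>j. ev i a j + ev i b j)" by (auto simp: ev_def)
  thus ?thesis using dual_add[OF f ev_carrier[OF i] ev_carrier[OF i]] by simp
qed

lemma ev_scale: "f \<in> l1_dual n \<Longrightarrow> i < n \<Longrightarrow> f (ev i (c *\<^sub>R a)) = c * f (ev i a)"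
proof -
  assume f: "f \<in> l1_dual n" and i: "i < n"
  have "ev i (c *\<^sub>R a) = (\<lambda>j. c *\<^sub>R ev i a j)" by (auto simp: ev_def)
  thus ?thesis using dual_scale[OF f ev_carrier[OF i]] by simp
qed

lemma l1_norm_nonneg: "0 \<le> l1_norm n x"
  by (simp add: l1_norm_def sum_nonneg)

lemma dual_bound:
  assumes f: "f \<in> l1_dual n" and u: "u \<in> l1_carrier n"
  shows "\<bar>f u\<bar> \<le> l1_dual_norm n f * l1_norm n u"
proof -
  define A where "A = {\<bar>f x\<bar> | x. x \<in> l1_carrier n \<and> l1_norm n x \<le> 1}"
  obtain K where K: "\<forall>x\<in>l1_carrier n. \<bar>f x\<bar> \<le> K * l1_norm n x"
    using f by (auto simp: l1_dual_def)
  have bdd: "bdd_above A"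
  proof (rule bdd_aboveI)
    fix a assume "a \<in> A"
    then obtain x where x: "x \<in> l1_carrier n" "l1_norm n x \<le> 1" "a = \<bar>f x\<bar>"
      by (auto simp: A_def)
    have "a \<le> K * l1_norm n x" using K x by auto
    also have "\<dots> \<le> max K 0 * l1_norm n x"
      by (rule mult_right_mono) (auto simp: l1_norm_nonneg)
    also have "\<dots> \<le> max K 0"
      using x(2) l1_norm_nonneg[of n x] by (simp add: mult_left_le)
    finally show "a \<le> max K 0" .
  qed
  show ?thesis
  proof (cases "l1_norm n u = 0")
    case True
    have "\<forall>i\<in>{..<n}. norm (u i) = 0"
      using True by (subst sum_nonneg_eq_0_iff[symmetric]) (auto simp: l1_norm_def)
    have "u = (\<lambda>i. 0)"
    proof (rule ext)
      fix i show "u i = 0"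
      proof (cases "i < n")
        case True thus ?thesis using \<open>\<forall>i\<in>{..<n}. norm (u i) = 0\<close> by simp
      next
        case False thus ?thesis using u by (simp add: l1_carrier_def)
      qed
    qed
    thus ?thesis using dual_zero[OF f] True by simp
  next
    case False
    define t where "t = l1_norm n u"
    have t: "t > 0" using False l1_norm_nonneg[of n u] by (simp add: t_def)
    define w where "w = (\<lambda>i. (1/t) *\<^sub>R u i)"
    have wc: "w \<in> l1_carrier n" using u by (auto simp: w_def l1_carrier_def)
    have "l1_norm n w = (\<Sum>i<n. (1/t) * norm (u i))"
      using t by (simp add: l1_norm_def w_def)
    also have "\<dots> = 1" using t by (simp add: sum_divide_distrib[symmetric] t_def[symmetric] l1_norm_def[symmetric])
    finally have wn: "l1_norm n w = 1" .
    have fw: "f w = (1/t) * f u" unfolding w_def by (rule dual_scale[OF f u])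
    have "\<bar>f w\<bar> \<in> A" using wc wn by (auto simp: A_def)
    hence "\<bar>f w\<bar> \<le> Sup A" using bdd by (rule cSup_upper)
    hence "\<bar>f u\<bar> / t \<le> Sup A" using fw t by (simp add: abs_mult)
    thus ?thesis using t by (simp add: l1_dual_norm_def A_def[symmetric] t_def[symmetric] pos_divide_le_eq mult.commute)
  qed
qed

lemma dual_decomp:
  assumes f: "f \<in> l1_dual n" and w: "w \<in> l1_carrier n"
  shows "f w = (\<Sum>i<n. f (ev i (w i)))"
proof -
  have "m \<le> n \<Longrightarrow> f (\<lambda>j. if j < m then w j else 0) = (\<Sum>i<m. f (ev i (w i)))" for m
  proof (induction m)
    case 0
    then show ?case using dual_zero[OF f] by simp
  next
    case (Suc m)
    have c1: "(\<lambda>j. if j < m then w j else 0) \<in> l1_carrier n"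
      using Suc.prems by (auto simp: l1_carrier_def)
    have "(\<lambda>j. if j < Suc m then w j else 0) = (\<lambda>j. (if j < m then w j else 0) + ev m (w m) j)"
      by (auto simp: ev_def)
    hence "f (\<lambda>j. if j < Suc m then w j else 0) = f (\<lambda>j. if j < m then w j else 0) + f (ev m (w m))"
      using dual_add[OF f c1 ev_carrier] Suc.prems by simp
    then show ?case using Suc by simp
  qed
  from this[of n] have "f (\<lambda>j. if j < n then w j else 0) = (\<Sum>i<n. f (ev i (w i)))" by simp
  moreover have "(\<lambda>j. if j < n then w j else 0) = w" using w by (auto simp: l1_carrier_def)
  ultimately show ?thesis by simp
qed

lemma Dset_onorm:
  assumes g: "g \<in> Dset d" and d: "d \<noteq> 0"
  shows "onorm g = norm d" "bounded_linear g" "g d = (norm d)^2"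
proof -
  from g have "g d = onorm g * norm d" "g d = (norm d)^2" "bounded_linear g"
    by (auto simp: Dset_def)
  thus "onorm g = norm d" "bounded_linear g" "g d = (norm d)^2" using d
    by (auto simp: power2_eq_square)
qed

lemma omega_bound:
  assumes lip: "C-lipschitz_on UNIV S" and g: "g \<in> Dset (a - b)" and ab: "a \<noteq> b"
  shows "\<bar>g (S a - S b)\<bar> / (norm (a - b))^2 \<le> C"
proof -
  have d: "a - b \<noteq> 0" using ab by simp
  note gg = Dset_onorm[OF g d]
  have C: "0 \<le> C" using lip by (simp add: lipschitz_on_def)
  have "\<bar>g (S a - S b)\<bar> \<le> onorm g * norm (S a - S b)"
    using onorm[OF gg(2)] by simp
  also have "\<dots> \<le> norm (a - b) * (C * norm (a - b))"
    using lipschitz_onD[OF lip, of a b] gg(1) by (simp add: dist_norm mult_left_mono)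
  finally have "\<bar>g (S a - S b)\<bar> \<le> C * (norm (a - b))^2"
    by (simp add: power2_eq_square algebra_simps)
  thus ?thesis using d by (simp add: divide_le_eq)
qed

lemma main_le:
  fixes S :: "'a::real_normed_vector \<Rightarrow> 'a"
  assumes lip: "C-lipschitz_on UNIV S"
    and x: "x \<in> l1_carrier n" and y: "y \<in> l1_carrier n" and xy: "x \<noteq> y"
    and f: "f \<in> l1_Dset n (l1_diff x y)"
  defines "A2 \<equiv> {\<bar>g (S a - S b)\<bar> / (norm (a - b))^2 | a b g. a \<noteq> b \<and> g \<in> Dset (a - b)}"
  shows "A2 \<noteq> {} \<and> \<bar>f (l1_diff (diag_map n S x) (diag_map n S y))\<bar> / (l1_norm n (l1_diff x y))^2 \<le> Sup A2"
proof -
  have bdd2: "bdd_above A2"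
    by (rule bdd_aboveI[where M=C]) (auto simp: A2_def intro: omega_bound[OF lip])
  define z where "z = l1_diff x y"
  define L where "L = l1_norm n z"
  have zc: "z \<in> l1_carrier n" using x y by (auto simp: z_def l1_diff_def l1_carrier_def)
  have fd: "f \<in> l1_dual n" and fz1: "f z = l1_dual_norm n f * L" and fz2: "f z = L^2"
    using f by (auto simp: l1_Dset_def z_def L_def)
  obtain i0 where i0: "x i0 \<noteq> y i0" using xy by auto
  have i0n: "i0 < n" using i0 x y by (auto simp: l1_carrier_def) (metis not_le)
  have zi0: "z i0 \<noteq> 0" using i0 by (simp add: z_def l1_diff_def)
  have "norm (z i0) \<le> L"
    unfolding L_def l1_norm_def by (rule member_le_sum) (use i0n in auto)
  hence Lpos: "L > 0" using zi0 by (meson zero_less_norm_iff order_less_le_trans)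
  have N: "l1_dual_norm n f = L" using fz1 fz2 Lpos by (simp add: power2_eq_square)
  have bnd: "\<bar>f (ev i v)\<bar> \<le> L * norm v" if "i < n" for i v
    using dual_bound[OF fd ev_carrier[OF that], of v] ev_norm[OF that, of v] N by simp
  have dec: "f z = (\<Sum>i<n. f (ev i (z i)))" by (rule dual_decomp[OF fd zc])
  have "(\<Sum>i<n. L * norm (z i) - f (ev i (z i))) = L * L - f z"
    by (simp add: sum_subtractf sum_distrib_left[symmetric] dec L_def l1_norm_def)
  also have "\<dots> = 0" using fz2 by (simp add: power2_eq_square)
  finally have "\<forall>i\<in>{..<n}. L * norm (z i) - f (ev i (z i)) = 0"
    by (subst sum_nonneg_eq_0_iff[symmetric]) (auto intro: sum_nonneg simp: abs_le_iff dest: bnd)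
  hence eq: "f (ev i (z i)) = L * norm (z i)" if "i < n" for i using that by auto
  have fev0: "f (ev i 0) = 0" if "i < n" for i
    using ev_scale[OF fd that, of 0 0] by simp
  have key: "\<exists>g. g \<in> Dset (z i)" and keybound: "\<bar>f (ev i (S (x i) - S (y i)))\<bar> \<le> Sup A2 * L * norm (z i)"
    if i: "i < n" and zi: "z i \<noteq> 0" for i
  proof -
    define c where "c = norm (z i) / L"
    define g where "g = (\<lambda>v. c * f (ev i v))"
    have c: "c > 0" using zi Lpos by (simp add: c_def)
    have gb: "\<bar>g v\<bar> \<le> norm (z i) * norm v" for v
    proof -
      have "\<bar>g v\<bar> = c * \<bar>f (ev i v)\<bar>" using c by (simp add: g_def abs_mult)
      also have "\<dots> \<le> c * (L * norm v)" using bnd[OF i] c by (simp add: mult_left_mono)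
      also have "\<dots> = norm (z i) * norm v" using Lpos by (simp add: c_def)
      finally show ?thesis .
    qed
    have bl: "bounded_linear g"
    proof (rule bounded_linear_intro[where K="norm (z i)"])
      fix v show "norm (g v) \<le> norm v * norm (z i)" using gb[of v] by (simp add: mult.commute)
    qed (auto simp: g_def ev_add[OF fd i] ev_scale[OF fd i] algebra_simps)
    have gz: "g (z i) = (norm (z i))^2"
      using eq[OF i] Lpos by (simp add: g_def c_def power2_eq_square)
    have on1: "onorm g \<le> norm (z i)"
      by (rule onorm_bound) (use gb in auto)
    have "norm (g (z i)) \<le> onorm g * norm (z i)" by (rule onorm[OF bl])
    hence "norm (z i) \<le> onorm g" using gz zi by (simp add: power2_eq_square)
    hence on: "onorm g = norm (z i)" using on1 by simp
    have gD: "g \<in> Dset (z i)" using bl gz on by (simp add: Dset_def power2_eq_square)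
    thus "\<exists>g. g \<in> Dset (z i)" by blast
    have xyi: "x i \<noteq> y i" and zxy: "z i = x i - y i" using zi by (auto simp: z_def l1_diff_def)
    have "\<bar>g (S (x i) - S (y i))\<bar> / (norm (x i - y i))^2 \<in> A2"
    proof -
      have "g \<in> Dset (x i - y i)" using gD zxy by simp
      thus ?thesis unfolding A2_def using xyi by blast
    qed
    hence le: "\<bar>g (S (x i) - S (y i))\<bar> / (norm (z i))^2 \<le> Sup A2"
      using cSup_upper[OF _ bdd2] zxy by simp
    have "\<bar>g (S (x i) - S (y i))\<bar> = c * \<bar>f (ev i (S (x i) - S (y i)))\<bar>"
      using c by (simp add: g_def abs_mult)
    hence "c * \<bar>f (ev i (S (x i) - S (y i)))\<bar> \<le> Sup A2 * (norm (z i))^2"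
      using le zi by (simp add: divide_le_eq)
    hence "\<bar>f (ev i (S (x i) - S (y i)))\<bar> \<le> Sup A2 * (norm (z i))^2 / c"
      using c by (simp add: le_divide_eq mult.commute)
    also have "\<dots> = Sup A2 * L * norm (z i)"
      using zi Lpos by (simp add: c_def power2_eq_square field_simps)
    finally show "\<bar>f (ev i (S (x i) - S (y i)))\<bar> \<le> Sup A2 * L * norm (z i)" .
  qed
  have ne: "A2 \<noteq> {}"
  proof -
    obtain g where "g \<in> Dset (z i0)" using key[OF i0n zi0] by blast
    hence "\<bar>g (S (x i0) - S (y i0))\<bar> / (norm (x i0 - y i0))^2 \<in> A2"
      unfolding A2_def using i0 by (auto simp: z_def l1_diff_def)
    thus ?thesis by blast
  qed
  have kb: "\<bar>f (ev i (S (x i) - S (y i)))\<bar> \<le> Sup A2 * L * norm (z i)" if i: "i < n" for i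
  proof (cases "z i = 0")
    case True
    hence "x i = y i" by (simp add: z_def l1_diff_def)
    thus ?thesis using True fev0[OF i] by simp
  next
    case False thus ?thesis using keybound[OF i] by blast
  qed
  define w where "w = l1_diff (diag_map n S x) (diag_map n S y)"
  have wc: "w \<in> l1_carrier n" by (auto simp: w_def l1_diff_def diag_map_def l1_carrier_def)
  have wi: "w i = S (x i) - S (y i)" if "i < n" for i using that by (simp add: w_def l1_diff_def diag_map_def)
  have "\<bar>f w\<bar> = \<bar>\<Sum>i<n. f (ev i (w i))\<bar>" by (simp add: dual_decomp[OF fd wc])
  also have "\<dots> \<le> (\<Sum>i<n. \<bar>f (ev i (w i))\<bar>)" by (rule sum_abs)
  also have "\<dots> \<le> (\<Sum>i<n. Sup A2 * L * norm (z i))"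
    by (rule sum_mono) (simp add: wi kb)
  also have "\<dots> = Sup A2 * L * L" by (simp add: sum_distrib_left[symmetric] L_def l1_norm_def)
  finally have "\<bar>f w\<bar> / L^2 \<le> Sup A2" using Lpos by (simp add: divide_le_eq power2_eq_square)
  thus ?thesis using ne by (simp add: w_def z_def[symmetric] L_def[symmetric])
qed

lemma sub_elem:
  fixes S :: "'a::real_normed_vector \<Rightarrow> 'a"
  assumes n: "0 < n" and ab: "a \<noteq> b" and g: "g \<in> Dset (a - b)"
  shows "\<bar>g (S a - S b)\<bar> / (norm (a - b))^2 \<in>
    {\<bar>f (l1_diff (diag_map n S x) (diag_map n S y))\<bar> / (l1_norm n (l1_diff x y))^2 | x y f.
      x \<in> l1_carrier n \<and> y \<in> l1_carrier n \<and> x \<noteq> y \<and> f \<in> l1_Dset n (l1_diff x y)}"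
proof -
  define d where "d = a - b"
  have d: "d \<noteq> 0" using ab by (simp add: d_def)
  note gg = Dset_onorm[OF g[folded d_def] d]
  interpret bl: bounded_linear g by (rule gg(2))
  define x where "x = ev 0 a"
  define y where "y = ev 0 b"
  define f where "f = (\<lambda>w::nat \<Rightarrow> 'a. g (w 0))"
  have xc: "x \<in> l1_carrier n" and yc: "y \<in> l1_carrier n" using n by (auto simp: x_def y_def ev_carrier)
  have xy: "x \<noteq> y" using ab by (metis ev_def x_def y_def)
  have zd: "l1_diff x y = ev 0 d" by (auto simp: l1_diff_def x_def y_def ev_def d_def)
  have n0: "norm (w 0) \<le> l1_norm n w" for w :: "nat \<Rightarrow> 'a"
    unfolding l1_norm_def by (rule member_le_sum) (use n in auto)
  have fb: "\<bar>f w\<bar> \<le> norm d * l1_norm n w" for w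
  proof -
    have "\<bar>f w\<bar> \<le> onorm g * norm (w 0)" using onorm[OF gg(2)] by (simp add: f_def)
    also have "\<dots> \<le> norm d * l1_norm n w" using gg(1) n0[of w] by (simp add: mult_left_mono)
    finally show ?thesis .
  qed
  have fd: "f \<in> l1_dual n"
    unfolding l1_dual_def using fb by (auto simp: f_def bl.add bl.scale)
  define B where "B = {\<bar>f w\<bar> | w. w \<in> l1_carrier n \<and> l1_norm n w \<le> 1}"
  have "Sup B = norm d"
  proof (rule cSup_eq_maximum)
    define w where "w = ev 0 ((1 / norm d) *\<^sub>R d)"
    have "\<bar>f w\<bar> = norm d" using d gg(3) by (simp add: w_def ev_def f_def bl.scale power2_eq_square)
    moreover have "w \<in> l1_carrier n" "l1_norm n w \<le> 1" using n d by (auto simp: w_def ev_carrier ev_norm)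
    ultimately show "norm d \<in> B" unfolding B_def by (metis (mono_tags, lifting) mem_Collect_eq)
  next
    fix t assume "t \<in> B"
    then obtain w where "w \<in> l1_carrier n" "l1_norm n w \<le> 1" "t = \<bar>f w\<bar>" by (auto simp: B_def)
    thus "t \<le> norm d" using fb[of w] by (smt (verit) mult_left_le norm_ge_zero)
  qed
  hence dn: "l1_dual_norm n f = norm d" by (simp add: l1_dual_norm_def B_def)
  have ln: "l1_norm n (l1_diff x y) = norm d" using zd n by (simp add: ev_norm)
  have fz: "f (l1_diff x y) = (norm d)^2" using zd gg(3) by (simp add: f_def ev_def)
  have fD: "f \<in> l1_Dset n (l1_diff x y)" using fd dn ln fz by (simp add: l1_Dset_def power2_eq_square)
  have val: "f (l1_diff (diag_map n S x) (diag_map n S y)) = g (S a - S b)"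
    using n by (simp add: f_def l1_diff_def diag_map_def x_def y_def ev_def)
  show ?thesis
    apply (simp only: mem_Collect_eq)
    apply (rule exI[of _ x], rule exI[of _ y], rule exI[of _ f])
    using xc yc xy fD val ln by (simp add: d_def)
qed

theorem lemma4p6:
  fixes S :: "'a::banach \<Rightarrow> 'a" and n :: nat
  assumes "n \<ge> 1" and "S \<in> Lip0"
  shows "l1_omega n (diag_map n S) = omega S"
proof -
  obtain C where lip: "C-lipschitz_on UNIV S" using assms(2) by (auto simp: Lip0_def)
  have n: "0 < n" using assms(1) by simp
  define A1 where "A1 = {\<bar>f (l1_diff (diag_map n S x) (diag_map n S y))\<bar> / (l1_norm n (l1_diff x y))^2 | x y f.
      x \<in> l1_carrier n \<and> y \<in> l1_carrier n \<and> x \<noteq> y \<and> f \<in> l1_Dset n (l1_diff x y)}"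
  define A2 where "A2 = {\<bar>g (S a - S b)\<bar> / (norm (a - b))^2 | a b g. a \<noteq> b \<and> g \<in> Dset (a - b)}"
  have sub: "A2 \<subseteq> A1"
    unfolding A1_def A2_def using sub_elem[OF n, of _ _ _ S] by blast
  have le: "A2 \<noteq> {} \<and> t \<le> Sup A2" if "t \<in> A1" for t
    using that main_le[OF lip] unfolding A1_def A2_def by blast
  have bdd2: "bdd_above A2"
    by (rule bdd_aboveI[where M=C]) (auto simp: A2_def intro: omega_bound[OF lip])
  have L: "l1_omega n (diag_map n S) = Sup A1" by (simp add: l1_omega_def A1_def)
  have R: "omega S = Sup A2" by (simp add: omega_def A2_def)
  show ?thesis
  proof (cases "A1 = {}")
    case True
    hence "A2 = {}" using sub by blast
    thus ?thesis using True L R by simp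
  next
    case False
    then obtain t where "t \<in> A1" by blast
    hence ne: "A2 \<noteq> {}" using le by blast
    have b1: "bdd_above A1" by (rule bdd_aboveI[where M="Sup A2"]) (use le in blast)
    have "Sup A1 \<le> Sup A2" by (rule cSup_least[OF False]) (use le in blast)
    moreover have "Sup A2 \<le> Sup A1" by (rule cSup_subset_mono[OF ne b1 sub])
    ultimately show ?thesis using L R by simp
  qed
qed

end
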